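(* Let $X$ be a finite-dimensional simplicial complex satisfying: (1) for all vertices $x,y$ of $X$, $\Sigma_x\subseteq\Sigma_y$ implies $x=y$; (2) if $K$ is a simplex of $X$ and $x$ is a vertex of $X$ with $x\notin K$, then there is a maximal simplex $L$ of $X$ with $K\subseteq L$ and $x\notin L$. Then $\mathrm{Aut}(X)$ is isomorphic to $\mathrm{Aut}(\mathcal{N}(X))$.
   Context: For a vertex $x$ of $X$, $\Sigma_x$ is the collection of maximal simplices of $X$ containing $x$. $\mathcal{N}(X)$ is the nerve of the collection of maximal simplices of $X$: its vertices are the maximal simplices of $X$, and a finite set of them is a simplex iff their common intersection is non-empty. $\mathrm{Aut}$ denotes the group of simplicial automorphisms. *)

theory Defs
  imports "HOL-Algebra.Group"
begin

definition simplicial_complex :: "'a set set \<Rightarrow> bool" where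
  "simplicial_complex K \<longleftrightarrow>
     (\<forall>\<sigma>\<in>K. finite \<sigma> \<and> \<sigma> \<noteq> {}) \<and>
     (\<forall>\<sigma>\<in>K. \<forall>\<tau>. \<tau> \<subseteq> \<sigma> \<and> \<tau> \<noteq> {} \<longrightarrow> \<tau> \<in> K)"

definition vertices :: "'a set set \<Rightarrow> 'a set" where
  "vertices K = \<Union>K"

definition finite_dimensional :: "'a set set \<Rightarrow> bool" where
  "finite_dimensional K \<longleftrightarrow> (\<exists>n::nat. \<forall>\<sigma>\<in>K. card \<sigma> \<le> n)"

definition maximal_simplices :: "'a set set \<Rightarrow> 'a set set" where
  "maximal_simplices K = {\<sigma>\<in>K. \<forall>\<tau>\<in>K. \<sigma> \<subseteq> \<tau> \<longrightarrow> \<tau> = \<sigma>}"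

definition Sigma_at :: "'a set set \<Rightarrow> 'a \<Rightarrow> 'a set set" where
  "Sigma_at K x = {\<sigma>\<in>maximal_simplices K. x \<in> \<sigma>}"

definition nerve :: "'a set set \<Rightarrow> 'a set set set" where
  "nerve K = {F. finite F \<and> F \<noteq> {} \<and> F \<subseteq> maximal_simplices K \<and> \<Inter>F \<noteq> {}}"

definition simplicial_aut :: "'a set set \<Rightarrow> ('a \<Rightarrow> 'a) \<Rightarrow> bool" where
  "simplicial_aut K f \<longleftrightarrow> bij_betw f (vertices K) (vertices K) \<and>
     (\<forall>\<sigma>. \<sigma> \<subseteq> vertices K \<longrightarrow> (\<sigma> \<in> K \<longleftrightarrow> f ` \<sigma> \<in> K))"

definition Aut_group :: "'a set set \<Rightarrow> ('a \<Rightarrow> 'a) monoid" where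
  "Aut_group K = \<lparr>carrier = {f. simplicial_aut K f \<and> (\<forall>x. x \<notin> vertices K \<longrightarrow> f x = x)},
                  mult = (\<lambda>f g. f \<circ> g), one = id\<rparr>"

end

theory Submission
  imports Defs
begin

lemma max_exists:
  assumes sc: "simplicial_complex X" and fd: "finite_dimensional X" and t: "\<tau> \<in> X"
  shows "\<exists>\<sigma>\<in>maximal_simplices X. \<tau> \<subseteq> \<sigma>"
proof -
  obtain n where n: "\<forall>\<sigma>\<in>X. card \<sigma> \<le> n" using fd unfolding finite_dimensional_def by auto
  define S where "S = card ` {\<rho>. \<rho> \<in> X \<and> \<tau> \<subseteq> \<rho>}"
  have fS: "finite S" by (rule finite_subset[of _ "{..n}"]) (use n in \<open>auto simp: S_def\<close>)
  have neS: "S \<noteq> {}" using t by (auto simp: S_def)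
  have "Max S \<in> S" using fS neS by simp
  then obtain \<rho> where r: "\<rho> \<in> X" "\<tau> \<subseteq> \<rho>" "card \<rho> = Max S" by (auto simp: S_def)
  have "\<rho> \<in> maximal_simplices X"
    unfolding maximal_simplices_def
  proof (intro CollectI conjI ballI impI r(1))
    fix \<rho>' assume "\<rho>' \<in> X" "\<rho> \<subseteq> \<rho>'"
    then have "card \<rho>' \<in> S" using r by (auto simp: S_def)
    then have "card \<rho>' \<le> card \<rho>" using fS r by simp
    moreover have "finite \<rho>'" using sc \<open>\<rho>' \<in> X\<close> unfolding simplicial_complex_def by auto
    ultimately show "\<rho>' = \<rho>" using \<open>\<rho> \<subseteq> \<rho>'\<close> by (metis card_seteq)
  qed
  then show ?thesis using r by auto
qed

lemma vert_nerve:
  assumes sc: "simplicial_complex X"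
  shows "vertices (nerve X) = maximal_simplices X"
proof
  show "vertices (nerve X) \<subseteq> maximal_simplices X" by (auto simp: vertices_def nerve_def)
  show "maximal_simplices X \<subseteq> vertices (nerve X)"
  proof
    fix \<sigma> assume s: "\<sigma> \<in> maximal_simplices X"
    then have "\<sigma> \<noteq> {}" using sc by (auto simp: simplicial_complex_def maximal_simplices_def)
    then have "{\<sigma>} \<in> nerve X" using s by (auto simp: nerve_def)
    then show "\<sigma> \<in> vertices (nerve X)" by (auto simp: vertices_def)
  qed
qed

lemma simplex_sub:
  "\<sigma> \<in> X \<Longrightarrow> \<sigma> \<subseteq> vertices X" by (auto simp: vertices_def)

lemma aut_max:
  assumes sc: "simplicial_complex X" and a: "simplicial_aut X f" and s: "\<sigma> \<in> maximal_simplices X"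
  shows "f ` \<sigma> \<in> maximal_simplices X"
proof -
  let ?V = "vertices X"
  have bij: "bij_betw f ?V ?V" and pres: "\<And>\<sigma>. \<sigma> \<subseteq> ?V \<Longrightarrow> (\<sigma> \<in> X \<longleftrightarrow> f ` \<sigma> \<in> X)"
    using a unfolding simplicial_aut_def by auto
  have sX: "\<sigma> \<in> X" using s by (auto simp: maximal_simplices_def)
  have sV: "\<sigma> \<subseteq> ?V" using sX by (rule simplex_sub)
  have fX: "f ` \<sigma> \<in> X" using pres sV sX by auto
  have inj: "inj_on f ?V" using bij bij_betw_def by blast
  show ?thesis unfolding maximal_simplices_def
  proof (intro CollectI conjI ballI impI fX)
    fix \<tau> assume t: "\<tau> \<in> X" "f ` \<sigma> \<subseteq> \<tau>"
    define \<rho> where "\<rho> = inv_into ?V f ` \<tau>"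
    have tV: "\<tau> \<subseteq> ?V" using t simplex_sub by blast
    have rV: "\<rho> \<subseteq> ?V" unfolding \<rho>_def using tV bij
      proof (intro image_subsetI)
      fix y assume "y \<in> \<tau>"
      then have "y \<in> f ` ?V" using tV bij by (auto simp: bij_betw_def)
      then show "inv_into ?V f y \<in> ?V" by (rule inv_into_into)
    qed
    have fr: "f ` \<rho> = \<tau>" unfolding \<rho>_def using tV bij
      by (simp add: bij_betw_def image_inv_into_cancel)
    have rX: "\<rho> \<in> X" using pres[OF rV] fr t by simp
    have "\<sigma> \<subseteq> \<rho>"
    proof
      fix x assume "x \<in> \<sigma>"
      then have "f x \<in> f ` \<rho>" using t(2) fr by auto
      then show "x \<in> \<rho>" using inj_on_image_mem_iff[OF inj] sV rV \<open>x \<in> \<sigma>\<close> by blast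
    qed
    then have "\<rho> = \<sigma>" using s rX by (auto simp: maximal_simplices_def)
    then show "\<tau> = f ` \<sigma>" using fr by simp
  qed
qed

lemma inter_image:
  assumes inj: "inj_on f V" and ne: "F \<noteq> {}" and sub: "\<forall>\<sigma>\<in>F. \<sigma> \<subseteq> V"
  shows "\<Inter>((\<lambda>\<sigma>. f ` \<sigma>) ` F) = f ` \<Inter>F"
proof
  show "f ` \<Inter>F \<subseteq> \<Inter>((\<lambda>\<sigma>. f ` \<sigma>) ` F)" by auto
  show "\<Inter>((\<lambda>\<sigma>. f ` \<sigma>) ` F) \<subseteq> f ` \<Inter>F"
  proof
    fix y assume y: "y \<in> \<Inter>((\<lambda>\<sigma>. f ` \<sigma>) ` F)"
    obtain \<sigma>0 where s0: "\<sigma>0 \<in> F" using ne by auto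
    then obtain x where x: "x \<in> \<sigma>0" "y = f x" using y by auto
    have "x \<in> \<Inter>F"
    proof
      fix \<sigma> assume s: "\<sigma> \<in> F"
      then obtain x' where "x' \<in> \<sigma>" "y = f x'" using y by auto
      moreover have "x = x'" using inj x s0 s sub \<open>x' \<in> \<sigma>\<close> \<open>y = f x'\<close>
        by (meson inj_onD subsetD)
      ultimately show "x \<in> \<sigma>" by simp
    qed
    then show "y \<in> f ` \<Inter>F" using x by auto
  qed
qed


lemma aut_inv:
  assumes a: "simplicial_aut X f"
  shows "simplicial_aut X (inv_into (vertices X) f)"
proof -
  let ?V = "vertices X" and ?g = "inv_into (vertices X) f"
  have bij: "bij_betw f ?V ?V" and pres: "\<And>\<sigma>. \<sigma> \<subseteq> ?V \<Longrightarrow> (\<sigma> \<in> X \<longleftrightarrow> f ` \<sigma> \<in> X)"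
    using a unfolding simplicial_aut_def by auto
  have bg: "bij_betw ?g ?V ?V" using bij by (rule bij_betw_inv_into)
  have "\<sigma> \<in> X \<longleftrightarrow> ?g ` \<sigma> \<in> X" if s: "\<sigma> \<subseteq> ?V" for \<sigma>
  proof -
    have gs: "?g ` \<sigma> \<subseteq> ?V" using bg s by (auto simp: bij_betw_def)
    have "f ` (?g ` \<sigma>) = \<sigma>" using s bij by (simp add: bij_betw_def image_inv_into_cancel)
    then show ?thesis using pres[OF gs] by simp
  qed
  then show ?thesis using bg unfolding simplicial_aut_def by auto
qed

lemma image_bij:
  assumes sc: "simplicial_complex X" and a: "simplicial_aut X f"
  shows "bij_betw (\<lambda>\<sigma>. f ` \<sigma>) (maximal_simplices X) (maximal_simplices X)"
proof -
  let ?V = "vertices X" and ?M = "maximal_simplices X" and ?g = "inv_into (vertices X) f"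
  have bij: "bij_betw f ?V ?V" using a unfolding simplicial_aut_def by auto
  have inj: "inj_on f ?V" using bij bij_betw_def by blast
  have MV: "\<And>\<sigma>. \<sigma> \<in> ?M \<Longrightarrow> \<sigma> \<subseteq> ?V" by (auto simp: maximal_simplices_def vertices_def)
  have "inj_on (\<lambda>\<sigma>. f ` \<sigma>) ?M"
  proof (rule inj_onI)
    fix a b assume "a \<in> ?M" "b \<in> ?M" "f ` a = f ` b"
    then show "a = b" using inj_on_image_eq_iff[OF inj MV MV] by blast
  qed
  moreover have "(\<lambda>\<sigma>. f ` \<sigma>) ` ?M = ?M"
  proof
    show "(\<lambda>\<sigma>. f ` \<sigma>) ` ?M \<subseteq> ?M" using aut_max[OF sc a] by blast
    show "?M \<subseteq> (\<lambda>\<sigma>. f ` \<sigma>) ` ?M"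
    proof
      fix \<tau> assume t: "\<tau> \<in> ?M"
      have g1: "?g ` \<tau> \<in> ?M" using aut_max[OF sc aut_inv[OF a] t] .
      have g2: "\<tau> = f ` (?g ` \<tau>)" using MV[OF t] bij by (simp add: bij_betw_def image_inv_into_cancel)
      show "\<tau> \<in> (\<lambda>\<sigma>. f ` \<sigma>) ` ?M" by (rule rev_image_eqI[where f="\<lambda>\<sigma>. f ` \<sigma>", OF g1 g2])
    qed
  qed
  ultimately show ?thesis by (simp add: bij_betw_def)
qed

definition PhiN :: "'a set set \<Rightarrow> ('a \<Rightarrow> 'a) \<Rightarrow> 'a set \<Rightarrow> 'a set" where
  "PhiN X f = (\<lambda>\<sigma>. if \<sigma> \<in> maximal_simplices X then f ` \<sigma> else \<sigma>)"

lemma Phi_carrier: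
  assumes sc: "simplicial_complex X" and fc: "f \<in> carrier (Aut_group X)"
  shows "PhiN X f \<in> carrier (Aut_group (nerve X))"
proof -
  let ?V = "vertices X" and ?M = "maximal_simplices X"
  have a: "simplicial_aut X f" using fc by (simp add: Aut_group_def)
  have bij: "bij_betw f ?V ?V" using a unfolding simplicial_aut_def by auto
  have inj: "inj_on f ?V" using bij bij_betw_def by blast
  have MV: "\<And>\<sigma>. \<sigma> \<in> ?M \<Longrightarrow> \<sigma> \<subseteq> ?V" by (auto simp: maximal_simplices_def vertices_def)
  have ib: "bij_betw (\<lambda>\<sigma>. f ` \<sigma>) ?M ?M" by (rule image_bij[OF sc a])
  have b1: "bij_betw (PhiN X f) ?M ?M"
    using ib by (rule bij_betw_cong[THEN iffD1, rotated]) (simp add: PhiN_def)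
  have pres: "F \<in> nerve X \<longleftrightarrow> PhiN X f ` F \<in> nerve X" if F: "F \<subseteq> ?M" for F
  proof -
    have eq: "PhiN X f ` F = (\<lambda>\<sigma>. f ` \<sigma>) ` F" using F by (auto simp: PhiN_def)
    have injF: "inj_on (\<lambda>\<sigma>. f ` \<sigma>) F" using ib F by (meson bij_betw_def inj_on_subset)
    have sub: "(\<lambda>\<sigma>. f ` \<sigma>) ` F \<subseteq> ?M" using ib F by (auto simp: bij_betw_def)
    have fin: "finite ((\<lambda>\<sigma>. f ` \<sigma>) ` F) \<longleftrightarrow> finite F" using injF by (rule finite_image_iff)
    show ?thesis
    proof (cases "F = {}")
      case True then show ?thesis by (simp add: nerve_def)
    next
      case False
      have "\<Inter>((\<lambda>\<sigma>. f ` \<sigma>) ` F) = f ` \<Inter>F"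
        by (rule inter_image[OF inj False]) (use F MV in blast)
      then show ?thesis unfolding eq nerve_def using fin sub F False by auto
    qed
  qed
  have sa: "simplicial_aut (nerve X) (PhiN X f)"
    unfolding simplicial_aut_def vert_nerve[OF sc] using b1 pres by blast
  have "\<forall>x. x \<notin> vertices (nerve X) \<longrightarrow> PhiN X f x = x"
    unfolding vert_nerve[OF sc] by (simp add: PhiN_def)
  then show ?thesis using sa by (simp add: Aut_group_def)
qed

lemma Phi_hom:
  assumes sc: "simplicial_complex X" and fc: "f \<in> carrier (Aut_group X)" and gc: "g \<in> carrier (Aut_group X)"
  shows "PhiN X (f \<circ> g) = PhiN X f \<circ> PhiN X g"
proof
  fix \<sigma>
  have a: "simplicial_aut X g" using gc by (simp add: Aut_group_def)
  show "PhiN X (f \<circ> g) \<sigma> = (PhiN X f \<circ> PhiN X g) \<sigma>"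
    using aut_max[OF sc a, of \<sigma>] by (auto simp: PhiN_def image_comp)
qed

lemma Sigma_image:
  assumes sc: "simplicial_complex X" and a: "simplicial_aut X f" and x: "x \<in> vertices X"
  shows "Sigma_at X (f x) = (\<lambda>\<sigma>. f ` \<sigma>) ` Sigma_at X x"
proof -
  let ?V = "vertices X" and ?M = "maximal_simplices X"
  have bij: "bij_betw f ?V ?V" using a unfolding simplicial_aut_def by auto
  have inj: "inj_on f ?V" using bij bij_betw_def by blast
  have MV: "\<And>\<sigma>. \<sigma> \<in> ?M \<Longrightarrow> \<sigma> \<subseteq> ?V" by (auto simp: maximal_simplices_def vertices_def)
  have ib: "bij_betw (\<lambda>\<sigma>. f ` \<sigma>) ?M ?M" by (rule image_bij[OF sc a])
  have mem: "\<And>\<sigma>. \<sigma> \<in> ?M \<Longrightarrow> f x \<in> f ` \<sigma> \<longleftrightarrow> x \<in> \<sigma>"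
    using inj_on_image_mem_iff[OF inj] x MV by blast
  show ?thesis
  proof
    show "Sigma_at X (f x) \<subseteq> (\<lambda>\<sigma>. f ` \<sigma>) ` Sigma_at X x"
    proof
      fix \<tau> assume "\<tau> \<in> Sigma_at X (f x)"
      then have t: "\<tau> \<in> ?M" "f x \<in> \<tau>" by (auto simp: Sigma_at_def)
      have "\<tau> \<in> (\<lambda>\<sigma>. f ` \<sigma>) ` ?M" using ib t(1) by (simp add: bij_betw_def)
      then obtain \<sigma> where s: "\<sigma> \<in> ?M" "\<tau> = f ` \<sigma>" by blast
      then have "x \<in> \<sigma>" using mem t by blast
      then show "\<tau> \<in> (\<lambda>\<sigma>. f ` \<sigma>) ` Sigma_at X x" using s by (auto simp: Sigma_at_def)
    qed
    show "(\<lambda>\<sigma>. f ` \<sigma>) ` Sigma_at X x \<subseteq> Sigma_at X (f x)"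
      using ib by (auto simp: Sigma_at_def bij_betw_def)
  qed
qed

lemma Phi_inj:
  assumes sc: "simplicial_complex X"
    and A1: "\<forall>x\<in>vertices X. \<forall>y\<in>vertices X. Sigma_at X x \<subseteq> Sigma_at X y \<longrightarrow> x = y"
    and fc: "f \<in> carrier (Aut_group X)" and gc: "g \<in> carrier (Aut_group X)"
    and eq: "PhiN X f = PhiN X g"
  shows "f = g"
proof
  fix x
  have af: "simplicial_aut X f" and ag: "simplicial_aut X g"
    and of: "\<And>x. x \<notin> vertices X \<Longrightarrow> f x = x" and og: "\<And>x. x \<notin> vertices X \<Longrightarrow> g x = x"
    using fc gc by (auto simp: Aut_group_def)
  show "f x = g x"
  proof (cases "x \<in> vertices X")
    case True
    have "Sigma_at X (f x) = (\<lambda>\<sigma>. f ` \<sigma>) ` Sigma_at X x" by (rule Sigma_image[OF sc af True])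
    also have "\<dots> = (\<lambda>\<sigma>. g ` \<sigma>) ` Sigma_at X x"
    proof (rule image_cong[OF refl])
      fix \<sigma> assume "\<sigma> \<in> Sigma_at X x"
      then have "\<sigma> \<in> maximal_simplices X" by (simp add: Sigma_at_def)
      then show "f ` \<sigma> = g ` \<sigma>" using fun_cong[OF eq, of \<sigma>] by (simp add: PhiN_def)
    qed
    also have "\<dots> = Sigma_at X (g x)" by (rule Sigma_image[OF sc ag True, symmetric])
    finally have "Sigma_at X (f x) = Sigma_at X (g x)" .
    moreover have "f x \<in> vertices X" "g x \<in> vertices X"
      using af ag True by (auto simp: simplicial_aut_def bij_betw_def)
    ultimately show ?thesis using A1 by blast
  next
    case False then show ?thesis using of og by simp
  qed
qed


lemma compact_inter:
  assumes sc: "simplicial_complex X" and G: "G \<subseteq> maximal_simplices X" "G \<noteq> {}"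
    and fin: "\<forall>F. finite F \<and> F \<noteq> {} \<and> F \<subseteq> G \<longrightarrow> \<Inter>F \<noteq> {}"
  shows "\<Inter>G \<noteq> {}"
proof
  assume e: "\<Inter>G = {}"
  obtain \<sigma>0 where s0: "\<sigma>0 \<in> G" using G by auto
  have f0: "finite \<sigma>0" using sc s0 G by (auto simp: simplicial_complex_def maximal_simplices_def)
  have "\<forall>z\<in>\<sigma>0. \<exists>\<tau>\<in>G. z \<notin> \<tau>" using e by auto
  then obtain t where t: "\<forall>z\<in>\<sigma>0. t z \<in> G \<and> z \<notin> t z" by metis
  define F where "F = insert \<sigma>0 (t ` \<sigma>0)"
  have "finite F" "F \<noteq> {}" "F \<subseteq> G" using f0 t s0 by (auto simp: F_def)
  then have "\<Inter>F \<noteq> {}" using fin by blast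
  moreover have "\<Inter>F = {}"
  proof -
    have "z \<notin> \<Inter>F" for z
    proof (cases "z \<in> \<sigma>0")
      case True then show ?thesis using t by (auto simp: F_def)
    next
      case False then show ?thesis by (auto simp: F_def)
    qed
    then show ?thesis by blast
  qed
  ultimately show False by simp
qed

definition goodfam :: "'a set set \<Rightarrow> 'a set set \<Rightarrow> bool" where
  "goodfam X G \<longleftrightarrow> G \<subseteq> maximal_simplices X \<and> G \<noteq> {} \<and> \<Inter>G \<noteq> {}"

lemma goodfam_transfer:
  assumes sc: "simplicial_complex X" and hM: "h ` maximal_simplices X \<subseteq> maximal_simplices X"
    and hN: "\<forall>F. F \<subseteq> maximal_simplices X \<and> F \<in> nerve X \<longrightarrow> h ` F \<in> nerve X"
    and g: "goodfam X G"
  shows "goodfam X (h ` G)"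
proof -
  have G: "G \<subseteq> maximal_simplices X" "G \<noteq> {}" "\<Inter>G \<noteq> {}" using g by (auto simp: goodfam_def)
  have hG: "h ` G \<subseteq> maximal_simplices X" using G hM by blast
  have "\<Inter>(h ` G) \<noteq> {}"
  proof (rule compact_inter[OF sc hG])
    show "h ` G \<noteq> {}" using G by simp
    show "\<forall>F. finite F \<and> F \<noteq> {} \<and> F \<subseteq> h ` G \<longrightarrow> \<Inter>F \<noteq> {}"
    proof (intro allI impI)
      fix F assume F: "finite F \<and> F \<noteq> {} \<and> F \<subseteq> h ` G"
      then obtain F' where F': "F' \<subseteq> G" "finite F'" "F = h ` F'"
        by (meson finite_subset_image)
      have "F' \<noteq> {}" using F F' by auto
      moreover have "\<Inter>G \<subseteq> \<Inter>F'" using F' by auto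
      ultimately have "F' \<in> nerve X" using F' G by (auto simp: nerve_def)
      then have "F \<in> nerve X" using hN F' G by blast
      then show "\<Inter>F \<noteq> {}" by (simp add: nerve_def)
    qed
  qed
  then show ?thesis using hG G by (simp add: goodfam_def)
qed

lemma Sigma_good:
  assumes sc: "simplicial_complex X" and fd: "finite_dimensional X" and x: "x \<in> vertices X"
  shows "goodfam X (Sigma_at X x)"
proof -
  obtain \<tau> where t: "\<tau> \<in> X" "x \<in> \<tau>" using x by (auto simp: vertices_def)
  then obtain \<sigma> where "\<sigma> \<in> maximal_simplices X" "\<tau> \<subseteq> \<sigma>" using max_exists[OF sc fd] by blast
  then have "\<sigma> \<in> Sigma_at X x" using t by (auto simp: Sigma_at_def)
  then show ?thesis by (auto simp: goodfam_def Sigma_at_def)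
qed

lemma good_sub_Sigma:
  assumes g: "goodfam X G"
  shows "\<exists>z\<in>vertices X. G \<subseteq> Sigma_at X z"
proof -
  have G: "G \<subseteq> maximal_simplices X" "G \<noteq> {}" "\<Inter>G \<noteq> {}" using g by (auto simp: goodfam_def)
  obtain z where z: "z \<in> \<Inter>G" using G by auto
  obtain \<sigma> where "\<sigma> \<in> G" using G by auto
  then have "z \<in> vertices X" using z G by (auto simp: vertices_def maximal_simplices_def)
  moreover have "G \<subseteq> Sigma_at X z" using z G by (auto simp: Sigma_at_def)
  ultimately show ?thesis by blast
qed

lemma Sigma_maxfam:
  assumes A1: "\<forall>x\<in>vertices X. \<forall>y\<in>vertices X. Sigma_at X x \<subseteq> Sigma_at X y \<longrightarrow> x = y"
    and x: "x \<in> vertices X" and g: "goodfam X G" and sub: "Sigma_at X x \<subseteq> G"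
  shows "G = Sigma_at X x"
proof -
  obtain z where z: "z \<in> vertices X" "G \<subseteq> Sigma_at X z" using good_sub_Sigma[OF g] by blast
  then have "x = z" using A1 x sub by blast
  then show ?thesis using z sub by blast
qed

lemma Sigma_transfer:
  assumes sc: "simplicial_complex X" and fd: "finite_dimensional X"
    and A1: "\<forall>x\<in>vertices X. \<forall>y\<in>vertices X. Sigma_at X x \<subseteq> Sigma_at X y \<longrightarrow> x = y"
    and pM: "p ` maximal_simplices X \<subseteq> maximal_simplices X"
    and qM: "q ` maximal_simplices X \<subseteq> maximal_simplices X"
    and pq: "\<forall>\<sigma>\<in>maximal_simplices X. q (p \<sigma>) = \<sigma> \<and> p (q \<sigma>) = \<sigma>"
    and pN: "\<forall>F. F \<subseteq> maximal_simplices X \<and> F \<in> nerve X \<longrightarrow> p ` F \<in> nerve X"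
    and qN: "\<forall>F. F \<subseteq> maximal_simplices X \<and> F \<in> nerve X \<longrightarrow> q ` F \<in> nerve X"
    and x: "x \<in> vertices X"
  shows "\<exists>z\<in>vertices X. Sigma_at X z = p ` Sigma_at X x"
proof -
  let ?S = "Sigma_at X"
  have SM: "\<And>y. ?S y \<subseteq> maximal_simplices X" by (auto simp: Sigma_at_def)
  have g1: "goodfam X (p ` ?S x)" by (rule goodfam_transfer[OF sc pM pN Sigma_good[OF sc fd x]])
  obtain z where z: "z \<in> vertices X" "p ` ?S x \<subseteq> ?S z" using good_sub_Sigma[OF g1] by blast
  have "q ` p ` ?S x = ?S x"
  proof -
    have "q ` p ` ?S x = (\<lambda>\<sigma>. q (p \<sigma>)) ` ?S x" by (simp add: image_image)
    also have "\<dots> = (\<lambda>\<sigma>. \<sigma>) ` ?S x"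
      by (rule image_cong[OF refl]) (use pq SM[of x] in blast)
    also have "\<dots> = ?S x" by simp
    finally show ?thesis .
  qed
  then have sub: "?S x \<subseteq> q ` ?S z" using z by blast
  have g2: "goodfam X (q ` ?S z)" by (rule goodfam_transfer[OF sc qM qN Sigma_good[OF sc fd z(1)]])
  have e: "q ` ?S z = ?S x" by (rule Sigma_maxfam[OF A1 x g2 sub])
  have "p ` q ` ?S z = ?S z"
  proof -
    have "p ` q ` ?S z = (\<lambda>\<sigma>. p (q \<sigma>)) ` ?S z" by (simp add: image_image)
    also have "\<dots> = (\<lambda>\<sigma>. \<sigma>) ` ?S z"
      by (rule image_cong[OF refl]) (use pq SM[of z] in blast)
    also have "\<dots> = ?S z" by simp
    finally show ?thesis .
  qed
  then have "?S z = p ` ?S x" using e by simp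
  then show ?thesis using z by blast
qed


lemma sc_sub: "simplicial_complex X \<Longrightarrow> \<sigma> \<in> X \<Longrightarrow> \<tau> \<subseteq> \<sigma> \<Longrightarrow> \<tau> \<noteq> {} \<Longrightarrow> \<tau> \<in> X"
  unfolding simplicial_complex_def by blast

lemma sc_ne: "simplicial_complex X \<Longrightarrow> \<sigma> \<in> X \<Longrightarrow> \<sigma> \<noteq> {}"
  unfolding simplicial_complex_def by blast

lemma Phi_surj:
  assumes sc: "simplicial_complex X" and fd: "finite_dimensional X"
    and A1: "\<forall>x\<in>vertices X. \<forall>y\<in>vertices X. Sigma_at X x \<subseteq> Sigma_at X y \<longrightarrow> x = y"
    and pc: "p \<in> carrier (Aut_group (nerve X))"
  shows "\<exists>f\<in>carrier (Aut_group X). PhiN X f = p"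
proof -
  let ?V = "vertices X" and ?M = "maximal_simplices X" and ?S = "Sigma_at X"
  have sa: "simplicial_aut (nerve X) p" and pid: "\<And>\<sigma>. \<sigma> \<notin> ?M \<Longrightarrow> p \<sigma> = \<sigma>"
    using pc vert_nerve[OF sc] by (auto simp: Aut_group_def)
  have pb: "bij_betw p ?M ?M" and pn: "\<And>F. F \<subseteq> ?M \<Longrightarrow> (F \<in> nerve X \<longleftrightarrow> p ` F \<in> nerve X)"
    using sa vert_nerve[OF sc] unfolding simplicial_aut_def by auto
  define q where "q = inv_into ?M p"
  have qb: "bij_betw q ?M ?M" unfolding q_def using pb by (rule bij_betw_inv_into)
  have pM: "p ` ?M \<subseteq> ?M" and qM: "q ` ?M \<subseteq> ?M" using pb qb by (auto simp: bij_betw_def)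
  have pinj: "inj_on p ?M" using pb by (simp add: bij_betw_def)
  have pq: "\<forall>\<sigma>\<in>?M. q (p \<sigma>) = \<sigma> \<and> p (q \<sigma>) = \<sigma>"
    using pb unfolding q_def by (auto simp: bij_betw_def inv_into_f_f f_inv_into_f)
  have pN: "\<forall>F. F \<subseteq> ?M \<and> F \<in> nerve X \<longrightarrow> p ` F \<in> nerve X" using pn by blast
  have qN: "\<forall>F. F \<subseteq> ?M \<and> F \<in> nerve X \<longrightarrow> q ` F \<in> nerve X"
  proof (intro allI impI)
    fix F assume F: "F \<subseteq> ?M \<and> F \<in> nerve X"
    have qF: "q ` F \<subseteq> ?M" using F qM by blast
    have "p ` q ` F = (\<lambda>\<sigma>. p (q \<sigma>)) ` F" by (simp add: image_image)
    also have "\<dots> = (\<lambda>\<sigma>. \<sigma>) ` F" by (rule image_cong[OF refl]) (use pq F in blast)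
    also have "\<dots> = F" by simp
    finally show "q ` F \<in> nerve X" using pn[OF qF] F by simp
  qed
  have SM: "\<And>y. ?S y \<subseteq> ?M" by (auto simp: Sigma_at_def)
  have Suniq: "\<And>y z. y \<in> ?V \<Longrightarrow> z \<in> ?V \<Longrightarrow> ?S y = ?S z \<Longrightarrow> y = z" 
  proof -
    fix y z assume "y \<in> ?V" "z \<in> ?V" "?S y = ?S z"
    then show "y = z" using A1 by (metis order_refl)
  qed
  have exP: "\<exists>!z. z \<in> ?V \<and> ?S z = p ` ?S x" if x: "x \<in> ?V" for x
  proof -
    obtain z where z: "z \<in> ?V" "?S z = p ` ?S x" using Sigma_transfer[OF sc fd A1 pM qM pq pN qN x] by blast
    show ?thesis
    proof (rule ex1I[where a=z])
      show "z \<in> ?V \<and> ?S z = p ` ?S x" using z by simp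
      fix y assume "y \<in> ?V \<and> ?S y = p ` ?S x"
      then show "y = z" using Suniq z by simp
    qed
  qed
  have pq': "\<forall>\<sigma>\<in>?M. p (q \<sigma>) = \<sigma> \<and> q (p \<sigma>) = \<sigma>" using pq by blast
  have exQ: "\<exists>!z. z \<in> ?V \<and> ?S z = q ` ?S x" if x: "x \<in> ?V" for x
  proof -
    obtain z where z: "z \<in> ?V" "?S z = q ` ?S x" using Sigma_transfer[OF sc fd A1 qM pM pq' qN pN x] by blast
    show ?thesis
    proof (rule ex1I[where a=z])
      show "z \<in> ?V \<and> ?S z = q ` ?S x" using z by simp
      fix y assume "y \<in> ?V \<and> ?S y = q ` ?S x"
      then show "y = z" using Suniq z by simp
    qed
  qed
  define f where "f x = (if x \<in> ?V then (THE z. z \<in> ?V \<and> ?S z = p ` ?S x) else x)" for x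
  define g where "g x = (if x \<in> ?V then (THE z. z \<in> ?V \<and> ?S z = q ` ?S x) else x)" for x
  have fV: "f x \<in> ?V \<and> ?S (f x) = p ` ?S x" if x: "x \<in> ?V" for x
    using theI'[OF exP[OF x]] x by (simp add: f_def)
  have gV: "g x \<in> ?V \<and> ?S (g x) = q ` ?S x" if x: "x \<in> ?V" for x
    using theI'[OF exQ[OF x]] x by (simp add: g_def)
  have qp_img: "q ` p ` G = G" if "G \<subseteq> ?M" for G
  proof -
    have "q ` p ` G = (\<lambda>\<sigma>. q (p \<sigma>)) ` G" by (simp add: image_image)
    also have "\<dots> = (\<lambda>\<sigma>. \<sigma>) ` G" by (rule image_cong[OF refl]) (use pq that in blast)
    finally show ?thesis by simp
  qed
  have pq_img: "p ` q ` G = G" if "G \<subseteq> ?M" for G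
  proof -
    have "p ` q ` G = (\<lambda>\<sigma>. p (q \<sigma>)) ` G" by (simp add: image_image)
    also have "\<dots> = (\<lambda>\<sigma>. \<sigma>) ` G" by (rule image_cong[OF refl]) (use pq that in blast)
    finally show ?thesis by simp
  qed
  have gf: "g (f x) = x" if x: "x \<in> ?V" for x
  proof -
    have a1: "f x \<in> ?V" using fV[OF x] by blast
    have a2: "g (f x) \<in> ?V" using gV[OF a1] by blast
    have "?S (g (f x)) = q ` p ` ?S x" using fV[OF x] gV[OF a1] by simp
    also have "\<dots> = ?S x" by (rule qp_img[OF SM])
    finally show ?thesis by (rule Suniq[OF a2 x])
  qed
  have fg: "f (g x) = x" if x: "x \<in> ?V" for x
  proof -
    have a1: "g x \<in> ?V" using gV[OF x] by blast
    have a2: "f (g x) \<in> ?V" using fV[OF a1] by blast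
    have "?S (f (g x)) = p ` q ` ?S x" using gV[OF x] fV[OF a1] by simp
    also have "\<dots> = ?S x" by (rule pq_img[OF SM])
    finally show ?thesis by (rule Suniq[OF a2 x])
  qed
  have fb: "bij_betw f ?V ?V"
  proof (rule bij_betw_byWitness[where f'=g])
    show "\<forall>a\<in>?V. g (f a) = a" using gf by blast
    show "\<forall>a'\<in>?V. f (g a') = a'" using fg by blast
    show "f ` ?V \<subseteq> ?V" using fV by blast
    show "g ` ?V \<subseteq> ?V" using gV by blast
  qed
  have key: "x \<in> \<sigma> \<longleftrightarrow> f x \<in> p \<sigma>" if s: "\<sigma> \<in> ?M" and x: "x \<in> ?V" for x \<sigma>
  proof -
    have "x \<in> \<sigma> \<longleftrightarrow> \<sigma> \<in> ?S x" using s by (simp add: Sigma_at_def)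
    also have "\<dots> \<longleftrightarrow> p \<sigma> \<in> p ` ?S x" using inj_on_image_mem_iff[OF pinj s SM] by simp
    also have "\<dots> \<longleftrightarrow> p \<sigma> \<in> ?S (f x)" using fV[OF x] by simp
    also have "\<dots> \<longleftrightarrow> f x \<in> p \<sigma>" using pM s by (auto simp: Sigma_at_def)
    finally show ?thesis .
  qed
  have MV: "\<And>\<sigma>. \<sigma> \<in> ?M \<Longrightarrow> \<sigma> \<subseteq> ?V" by (auto simp: maximal_simplices_def vertices_def)
  have fimg: "f ` \<sigma> = p \<sigma>" if s: "\<sigma> \<in> ?M" for \<sigma>
  proof
    show "f ` \<sigma> \<subseteq> p \<sigma>" using key[OF s] MV[OF s] by blast
    show "p \<sigma> \<subseteq> f ` \<sigma>"
    proof
      fix z assume z: "z \<in> p \<sigma>"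
      have ps: "p \<sigma> \<in> ?M" using pM s by blast
      have zV: "z \<in> ?V" using MV[OF ps] z by blast
      have "f (g z) \<in> p \<sigma>" using fg[OF zV] z by simp
      then have "g z \<in> \<sigma>" using key[OF s] gV[OF zV] by blast
      moreover have "z = f (g z)" using fg[OF zV] by simp
      ultimately show "z \<in> f ` \<sigma>" by (rule rev_image_eqI)
    qed
  qed
  have pres: "\<tau> \<in> X \<longleftrightarrow> f ` \<tau> \<in> X" if t: "\<tau> \<subseteq> ?V" for \<tau>
  proof
    assume tX: "\<tau> \<in> X"
    obtain \<sigma> where s: "\<sigma> \<in> ?M" "\<tau> \<subseteq> \<sigma>" using max_exists[OF sc fd tX] by blast
    have "f ` \<tau> \<subseteq> p \<sigma>" using fimg[OF s(1)] s(2) by blast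
    moreover have "p \<sigma> \<in> X" using pM s(1) by (auto simp: maximal_simplices_def)
    moreover have "f ` \<tau> \<noteq> {}" using sc_ne[OF sc tX] by simp
    ultimately show "f ` \<tau> \<in> X" using sc_sub[OF sc] by blast
  next
    assume ftX: "f ` \<tau> \<in> X"
    obtain \<sigma>' where s': "\<sigma>' \<in> ?M" "f ` \<tau> \<subseteq> \<sigma>'" using max_exists[OF sc fd ftX] by blast
    define \<sigma> where "\<sigma> = q \<sigma>'"
    have s1: "\<sigma> \<in> ?M" using qM s'(1) unfolding \<sigma>_def by blast
    have s2: "p \<sigma> = \<sigma>'" using pq s'(1) unfolding \<sigma>_def by blast
    have "\<tau> \<subseteq> \<sigma>"
    proof
      fix x assume "x \<in> \<tau>"
      then have "x \<in> ?V" "f x \<in> p \<sigma>" using t s' s2 by auto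
      then show "x \<in> \<sigma>" using key[OF s1] by blast
    qed
    moreover have "\<tau> \<noteq> {}" using sc_ne[OF sc ftX] by simp
    moreover have "\<sigma> \<in> X" using s1 by (simp add: maximal_simplices_def)
    ultimately show "\<tau> \<in> X" using sc_sub[OF sc] by blast
  qed
  have fa: "simplicial_aut X f" unfolding simplicial_aut_def using fb pres by blast
  have fid: "\<forall>x. x \<notin> ?V \<longrightarrow> f x = x" by (simp add: f_def)
  have fc: "f \<in> carrier (Aut_group X)" using fa fid by (simp add: Aut_group_def)
  have "PhiN X f = p"
  proof
    fix \<sigma> show "PhiN X f \<sigma> = p \<sigma>"
    proof (cases "\<sigma> \<in> ?M")
      case True then show ?thesis using fimg by (simp add: PhiN_def)
    next
      case False then show ?thesis using pid by (simp add: PhiN_def)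
    qed
  qed
  then show ?thesis using fc by blast
qed

theorem theorem3p2:
  fixes X :: "'a set set"
  assumes "simplicial_complex X"
    and "finite_dimensional X"
    and "\<forall>x\<in>vertices X. \<forall>y\<in>vertices X. Sigma_at X x \<subseteq> Sigma_at X y \<longrightarrow> x = y"
    and "\<forall>K\<in>X. \<forall>x\<in>vertices X. x \<notin> K \<longrightarrow> (\<exists>L\<in>maximal_simplices X. K \<subseteq> L \<and> x \<notin> L)"
  shows "Aut_group X \<cong> Aut_group (nerve X)"
proof -
  note sc = assms(1) and fd = assms(2) and A1 = assms(3)
  have hom: "PhiN X \<in> hom (Aut_group X) (Aut_group (nerve X))"
  proof (rule homI)
    fix f assume "f \<in> carrier (Aut_group X)"
    then show "PhiN X f \<in> carrier (Aut_group (nerve X))" by (rule Phi_carrier[OF sc])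
  next
    fix f g assume "f \<in> carrier (Aut_group X)" "g \<in> carrier (Aut_group X)"
    then show "PhiN X (f \<otimes>\<^bsub>Aut_group X\<^esub> g) = PhiN X f \<otimes>\<^bsub>Aut_group (nerve X)\<^esub> PhiN X g"
      using Phi_hom[OF sc] by (simp add: Aut_group_def)
  qed
  have inj: "inj_on (PhiN X) (carrier (Aut_group X))"
    by (rule inj_onI) (rule Phi_inj[OF sc A1])
  have img: "PhiN X ` carrier (Aut_group X) = carrier (Aut_group (nerve X))"
  proof
    show "PhiN X ` carrier (Aut_group X) \<subseteq> carrier (Aut_group (nerve X))"
      using Phi_carrier[OF sc] by blast
    show "carrier (Aut_group (nerve X)) \<subseteq> PhiN X ` carrier (Aut_group X)"
    proof
      fix p assume "p \<in> carrier (Aut_group (nerve X))"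
      then obtain f where "f \<in> carrier (Aut_group X)" "PhiN X f = p"
        using Phi_surj[OF sc fd A1] by blast
      then show "p \<in> PhiN X ` carrier (Aut_group X)" by blast
    qed
  qed
  have "PhiN X \<in> iso (Aut_group X) (Aut_group (nerve X))"
    using hom inj img by (simp add: iso_def bij_betw_def)
  then show ?thesis by (rule is_isoI)
qed

end
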